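(* Let $M$ be a complex manifold, $m\ge 1$, and let $\varphi_0,\dots,\varphi_m$ be smooth homogeneous complex-valued differential forms on $M$ of degrees $|\varphi_0|,\dots,|\varphi_m|$. Then $$ d\,\omega_m(\varphi_0,\dots,\varphi_m)=(-1)^m\,\partial\varphi_0\wedge\dots\wedge\partial\varphi_m+\overline\partial\varphi_0\wedge\dots\wedge\overline\partial\varphi_m+\frac{1}{m!}\,\mathrm{Alt}_{m+1}\Big((-1)^{|\varphi_0|}\,\overline\partial\partial\varphi_0\wedge\omega_{m-1}(\varphi_1,\dots,\varphi_m)\Big). $$
   Context: Here $d=\partial+\overline\partial$. For homogeneous forms $f_1,\dots,f_n$ and an expression $F(f_1,\dots,f_n)$ set $\mathrm{Alt}_nF(f_1,\dots,f_n):=\sum_{\sigma\in\Sigma_n}\mathrm{sgn}_{\sigma;f_1,\dots,f_n}F(f_{\sigma(1)},\dots,f_{\sigma(n)})$, where the sign of interchanging two of the forms $f_i,f_j$ is $(-1)^{(|f_i|+1)(|f_j|+1)}$ and the sign of a general permutation is the product of the signs of the transpositions composing it (i.e. the Koszul sign with respect to the shifted degrees $|f_i|+1$). Define $$ \omega_m(\varphi_0,\dots,\varphi_m):=\frac{1}{(m+1)!}\mathrm{Alt}_{m+1}\Big(\sum_{k=0}^m(-1)^k\varphi_0\wedge\partial\varphi_1\wedge\dots\wedge\partial\varphi_k\wedge\overline\partial\varphi_{k+1}\wedge\dots\wedge\overline\partial\varphi_m\Big), $$ with the alternation applied to the forms $\varphi_0,\dots,\varphi_m$ (not moving the differential operators);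 in particular $\omega_0(\varphi_0)=\varphi_0$. *)

theory Defs
  imports "HOL-Combinatorics.Permutations" Complex_Main
begin

text \<open>Abstract model of the algebra of smooth complex-valued forms on a complex
manifold: a real algebra 'a (multiplication = wedge product) with a grading
gr k (homogeneous forms of total degree k) and two operators D (=\<partial>) and
Db (=\<partial>-bar) satisfying the standard identities.\<close>

definition dolbeault_alg :: "(nat \<Rightarrow> 'a::real_algebra_1 set) \<Rightarrow> ('a \<Rightarrow> 'a) \<Rightarrow> ('a \<Rightarrow> 'a) \<Rightarrow> bool" where
  "dolbeault_alg gr D Db \<longleftrightarrow>
     (\<forall>k. 0 \<in> gr k \<and> (\<forall>x\<in>gr k. \<forall>y\<in>gr k. x + y \<in> gr k) \<and> (\<forall>c. \<forall>x\<in>gr k. c *\<^sub>R x \<in> gr k)) \<and>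
     1 \<in> gr 0 \<and>
     (\<forall>k l. \<forall>x\<in>gr k. \<forall>y\<in>gr l. x * y \<in> gr (k + l)) \<and>
     (\<forall>k l. \<forall>x\<in>gr k. \<forall>y\<in>gr l. x * y = ((-1::real) ^ (k * l)) *\<^sub>R (y * x)) \<and>
     (\<forall>x y. D (x + y) = D x + D y \<and> Db (x + y) = Db x + Db y) \<and>
     (\<forall>c x. D (c *\<^sub>R x) = c *\<^sub>R D x \<and> Db (c *\<^sub>R x) = c *\<^sub>R Db x) \<and>
     (\<forall>k. \<forall>x\<in>gr k. D x \<in> gr (k + 1) \<and> Db x \<in> gr (k + 1)) \<and>
     (\<forall>x. D (D x) = 0 \<and> Db (Db x) = 0 \<and> D (Db x) = - Db (D x)) \<and>
     (\<forall>k. \<forall>x\<in>gr k. \<forall>y.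
        D (x * y) = D x * y + ((-1::real) ^ k) *\<^sub>R (x * D y) \<and>
        Db (x * y) = Db x * y + ((-1::real) ^ k) *\<^sub>R (x * Db y))"

text \<open>Koszul sign of a permutation sigma of {..<n}, w.r.t. shifted degrees k i + 1:
the list f_0..f_{n-1} is rearranged to f_{sigma 0}..f_{sigma (n-1)}.\<close>
definition koszul_sign :: "nat \<Rightarrow> (nat \<Rightarrow> nat) \<Rightarrow> (nat \<Rightarrow> nat) \<Rightarrow> real" where
  "koszul_sign n k \<sigma> = (-1) ^ card {(a, b). a < b \<and> b < n \<and> \<sigma> b < \<sigma> a \<and>
                                     odd ((k (\<sigma> a) + 1) * (k (\<sigma> b) + 1))}"

definition Alt :: "nat \<Rightarrow> (nat \<Rightarrow> nat) \<Rightarrow> ((nat \<Rightarrow> 'a::real_vector) \<Rightarrow> (nat \<Rightarrow> nat) \<Rightarrow> 'a)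
                   \<Rightarrow> (nat \<Rightarrow> 'a) \<Rightarrow> 'a" where
  "Alt n k F \<phi> = (\<Sum>\<sigma> | \<sigma> permutes {..<n}. koszul_sign n k \<sigma> *\<^sub>R F (\<phi> \<circ> \<sigma>) (k \<circ> \<sigma>))"

definition omega :: "('a::real_algebra_1 \<Rightarrow> 'a) \<Rightarrow> ('a \<Rightarrow> 'a) \<Rightarrow> nat \<Rightarrow> (nat \<Rightarrow> nat) \<Rightarrow> (nat \<Rightarrow> 'a) \<Rightarrow> 'a" where
  "omega D Db m k \<phi> = (1 / fact (m + 1)) *\<^sub>R Alt (m + 1) k
     (\<lambda>f g. \<Sum>j\<le>m. ((-1::real) ^ j) *\<^sub>R
        (f 0 * prod_list (map (\<lambda>i. D (f i)) [1..<j + 1]) * prod_list (map (\<lambda>i. Db (f i)) [j + 1..<m + 1]))) \<phi>"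

end

theory Submission
  imports Defs
begin


definition PP :: "nat \<Rightarrow> (nat \<times> nat) set" where "PP n = {(a,b). a < b \<and> b < n}"

definition ks :: "nat \<Rightarrow> (nat \<Rightarrow> nat) \<Rightarrow> (nat \<Rightarrow> nat) \<Rightarrow> real" where
  "ks n e \<sigma> = (\<Prod>(a,b)\<in>PP n. if \<sigma> b < \<sigma> a \<and> odd (e (\<sigma> a) * e (\<sigma> b)) then -1 else 1)"

lemma finite_PP[simp]: "finite (PP n)"
  by (rule finite_subset[of _ "{..<n} \<times> {..<n}"]) (auto simp: PP_def)

lemma koszul_ks: "koszul_sign n k \<sigma> = ks n (\<lambda>i. k i + 1) \<sigma>"
proof -
  let ?Q = "\<lambda>p. \<sigma> (snd p) < \<sigma> (fst p) \<and> odd ((k (\<sigma> (fst p)) + 1) * (k (\<sigma> (snd p)) + 1))"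
  have "ks n (\<lambda>i. k i + 1) \<sigma> = (\<Prod>p\<in>PP n. if ?Q p then -1 else 1)"
    unfolding ks_def by (rule prod.cong) auto
  also have "\<dots> = (\<Prod>p\<in>PP n \<inter> {p. ?Q p}. -1) * (\<Prod>p\<in>PP n \<inter> - {p. ?Q p}. 1)"
    by (rule prod.If_cases) simp
  also have "\<dots> = (-1) ^ card (PP n \<inter> {p. ?Q p})" by simp
  also have "PP n \<inter> {p. ?Q p} = {(a, b). a < b \<and> b < n \<and> \<sigma> b < \<sigma> a \<and>
                                     odd ((k (\<sigma> a) + 1) * (k (\<sigma> b) + 1))}"
    by (auto simp: PP_def)
  finally show ?thesis unfolding koszul_sign_def by simp
qed

lemma PP_Suc: "PP (Suc n) = (\<lambda>b. (0, Suc b)) ` {..<n} \<union> (\<lambda>(a,b). (Suc a, Suc b)) ` PP n"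
proof (rule set_eqI)
  fix p show "p \<in> PP (Suc n) \<longleftrightarrow> p \<in> (\<lambda>b. (0, Suc b)) ` {..<n} \<union> (\<lambda>(a,b). (Suc a, Suc b)) ` PP n"
  proof (cases p)
    case (Pair a b)
    show ?thesis
    proof
      assume "p \<in> PP (Suc n)"
      then have ab: "a < b" "b < Suc n" using Pair by (auto simp: PP_def)
      then obtain b' where b': "b = Suc b'" by (cases b) auto
      show "p \<in> (\<lambda>b. (0, Suc b)) ` {..<n} \<union> (\<lambda>(a,b). (Suc a, Suc b)) ` PP n"
      proof (cases a)
        case 0 then show ?thesis using Pair ab b' by auto
      next
        case (Suc a') 
        then have "(a', b') \<in> PP n" using ab b' by (auto simp: PP_def)
        then show ?thesis using Pair Suc b' by force
      qed
    qed (auto simp: PP_def Pair)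
  qed
qed

lemma prod_PP_Suc:
  "(\<Prod>p\<in>PP (Suc n). h p) = (\<Prod>b<n. h (0, Suc b)) * (\<Prod>(a,b)\<in>PP n. h (Suc a, Suc b))"
proof -
  have d: "(\<lambda>b. (0::nat, Suc b)) ` {..<n} \<inter> (\<lambda>(a,b). (Suc a, Suc b)) ` PP n = {}" by auto
  have i1: "inj_on (\<lambda>b. (0::nat, Suc b)) {..<n}" by (auto simp: inj_on_def)
  have i2: "inj_on (\<lambda>(a,b). (Suc a, Suc b)) (PP n)" by (auto simp: inj_on_def)
  have "(\<Prod>p\<in>PP (Suc n). h p) = (\<Prod>p\<in>(\<lambda>b. (0, Suc b)) ` {..<n}. h p) * (\<Prod>p\<in>(\<lambda>(a,b). (Suc a, Suc b)) ` PP n. h p)"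
    unfolding PP_Suc by (rule prod.union_disjoint) (use d in auto)
  also have "\<dots> = (\<Prod>b<n. h (0, Suc b)) * (\<Prod>(a,b)\<in>PP n. h (Suc a, Suc b))"
    unfolding prod.reindex[OF i1] prod.reindex[OF i2] by (simp add: o_def case_prod_beta)
  finally show ?thesis .
qed



lemma ks_comp:
  assumes s: "\<sigma> permutes {..<n}" and t: "\<tau> permutes {..<n}"
  shows "ks n e (\<sigma> \<circ> \<tau>) = ks n e \<sigma> * ks n (e \<circ> \<sigma>) \<tau>"
proof -
  define S where "S u v = (if (u < v) \<noteq> (\<sigma> u < \<sigma> v) \<and> odd (e (\<sigma> u) * e (\<sigma> v)) then -1 else (1::real))" for u v
  have injs: "\<sigma> u = \<sigma> v \<longleftrightarrow> u = v" for u v using permutes_inj[OF s] by (auto simp: inj_def)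
  have injt: "\<tau> u = \<tau> v \<longleftrightarrow> u = v" for u v using permutes_inj[OF t] by (auto simp: inj_def)
  have Ssym: "S u v = S v u" if "u \<noteq> v" for u v
    using that injs[of u v] unfolding S_def by (auto simp: mult.commute)
  have ks_S: "ks n e \<sigma> = (\<Prod>(a,b)\<in>PP n. S a b)"
    unfolding ks_def S_def
    by (rule prod.cong) (auto simp: PP_def injs dest: order.strict_implies_not_eq)
  have pt: "(if (\<sigma> \<circ> \<tau>) b < (\<sigma> \<circ> \<tau>) a \<and> odd (e ((\<sigma> \<circ> \<tau>) a) * e ((\<sigma> \<circ> \<tau>) b)) then -1 else 1)
      = (if \<tau> b < \<tau> a \<and> odd ((e \<circ> \<sigma>) (\<tau> a) * (e \<circ> \<sigma>) (\<tau> b)) then -1 else 1) * S (\<tau> a) (\<tau> b)"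
    if "(a,b) \<in> PP n" for a b
  proof -
    have "a \<noteq> b" using that by (auto simp: PP_def)
    then have "\<tau> a \<noteq> \<tau> b" "\<sigma> (\<tau> a) \<noteq> \<sigma> (\<tau> b)" using injs injt by auto
    then show ?thesis unfolding S_def by (auto simp: linorder_neq_iff)
  qed
  define h where "h p = (min (\<tau> (fst p)) (\<tau> (snd p)), max (\<tau> (fst p)) (\<tau> (snd p)))" for p
  have tin: "u < n \<Longrightarrow> \<tau> u < n" for u using permutes_in_image[OF t] by auto
  have hsub: "h ` PP n \<subseteq> PP n"
  proof
    fix x assume "x \<in> h ` PP n"
    then obtain a b where ab: "a < b" "b < n" "x = h (a,b)" by (auto simp: PP_def)
    moreover have "\<tau> a \<noteq> \<tau> b" using injt[of a b] ab by auto
    ultimately show "x \<in> PP n" using tin[of a] tin[of b]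
      by (auto simp: h_def PP_def min_def max_def)
  qed
  have hinj: "inj_on h (PP n)"
  proof (rule inj_onI)
    fix p q assume p: "p \<in> PP n" and q: "q \<in> PP n" and hpq: "h p = h q"
    obtain a b where pab: "p = (a,b)" "a < b" using p by (cases p) (auto simp: PP_def)
    obtain c d where qcd: "q = (c,d)" "c < d" using q by (cases q) (auto simp: PP_def)
    from hpq have "{\<tau> a, \<tau> b} = {\<tau> c, \<tau> d}"
      unfolding h_def pab qcd by (auto simp: min_def max_def split: if_splits)
    then have "{a, b} = {c, d}" using injt by (auto simp: doubleton_eq_iff)
    then show "p = q" using pab qcd by (auto simp: doubleton_eq_iff)
  qed
  have himg: "h ` PP n = PP n" by (rule endo_inj_surj[OF finite_PP hsub hinj])
  have "(\<Prod>(a,b)\<in>PP n. S (\<tau> a) (\<tau> b)) = (\<Prod>p\<in>PP n. (\<lambda>(u,v). S u v) (h p))"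
  proof (rule prod.cong[OF refl])
    fix p assume "p \<in> PP n"
    then obtain a b where "p = (a,b)" "a \<noteq> b" by (cases p) (auto simp: PP_def)
    then show "(case p of (a, b) \<Rightarrow> S (\<tau> a) (\<tau> b)) = (\<lambda>(u,v). S u v) (h p)"
      using injt[of a b] Ssym[of "\<tau> a" "\<tau> b"] by (auto simp: h_def min_def max_def)
  qed
  also have "\<dots> = (\<Prod>p\<in>h ` PP n. (\<lambda>(u,v). S u v) p)"
    by (simp add: prod.reindex[OF hinj])
  also have "\<dots> = ks n e \<sigma>" unfolding himg ks_S ..
  finally have X: "(\<Prod>(a,b)\<in>PP n. S (\<tau> a) (\<tau> b)) = ks n e \<sigma>" .
  have "ks n e (\<sigma> \<circ> \<tau>) = (\<Prod>(a,b)\<in>PP n. (if \<tau> b < \<tau> a \<and> odd ((e \<circ> \<sigma>) (\<tau> a) * (e \<circ> \<sigma>) (\<tau> b)) then -1 else 1) * S (\<tau> a) (\<tau> b))"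
    unfolding ks_def by (rule prod.cong[OF refl]) (use pt in auto)
  also have "\<dots> = ks n (e \<circ> \<sigma>) \<tau> * (\<Prod>(a,b)\<in>PP n. S (\<tau> a) (\<tau> b))"
    unfolding ks_def prod.distrib[symmetric] by (rule prod.cong) auto
  finally show ?thesis using X by simp
qed

definition cyc :: "nat \<Rightarrow> nat \<Rightarrow> nat" where
  "cyc i l = (if l = 0 then i else if l \<le> i then l - 1 else l)"

definition ext :: "(nat \<Rightarrow> nat) \<Rightarrow> nat \<Rightarrow> nat" where
  "ext \<tau> l = (if l = 0 then 0 else Suc (\<tau> (l - 1)))"

lemma cyc_permutes: assumes "i < N" shows "cyc i permutes {..<N}"
proof (rule bij_imp_permutes)
  have inj: "inj_on (cyc i) {..<N}" by (auto simp: inj_on_def cyc_def split: if_splits)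
  have sub: "cyc i ` {..<N} \<subseteq> {..<N}" using assms by (auto simp: cyc_def)
  show "bij_betw (cyc i) {..<N} {..<N}" unfolding bij_betw_def
    using inj endo_inj_surj[OF _ sub inj] by auto
  show "x \<notin> {..<N} \<Longrightarrow> cyc i x = x" for x using assms by (auto simp: cyc_def)
qed

lemma ext_permutes: assumes t: "\<tau> permutes {..<n}" shows "ext \<tau> permutes {..<Suc n}"
proof (rule bij_imp_permutes)
  have injt: "\<tau> u = \<tau> v \<longleftrightarrow> u = v" for u v using permutes_inj[OF t] by (auto simp: inj_def)
  have tin: "u < n \<Longrightarrow> \<tau> u < n" for u using permutes_in_image[OF t] by auto
  have tout: "u \<ge> n \<Longrightarrow> \<tau> u = u" for u using permutes_not_in[OF t] by auto
  have inj: "inj_on (ext \<tau>) {..<Suc n}"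
    by (auto simp: inj_on_def ext_def injt split: if_splits)
  have sub: "ext \<tau> ` {..<Suc n} \<subseteq> {..<Suc n}" using tin by (auto simp: ext_def)
  show "bij_betw (ext \<tau>) {..<Suc n} {..<Suc n}" unfolding bij_betw_def
    using inj endo_inj_surj[OF _ sub inj] by auto
  show "x \<notin> {..<Suc n} \<Longrightarrow> ext \<tau> x = x" for x using tout[of "x - 1"] by (auto simp: ext_def)
qed

lemma ks_ext: "ks (Suc n) e (ext \<tau>) = ks n (e \<circ> Suc) \<tau>"
  unfolding ks_def prod_PP_Suc by (simp add: ext_def case_prod_beta)

lemma minus1_pow_if: "(if odd x then -1 else 1) = ((-1::real) ^ x)"
  by simp

lemma ks_cyc: assumes "i \<le> n"
  shows "ks (Suc n) e (cyc i) = (-1) ^ (e i * (\<Sum>l<i. e l))"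
proof -
  have mono: "cyc i (Suc a) < cyc i (Suc b)" if "a < b" for a b
    using that by (auto simp: cyc_def)
  have f1: "(\<Prod>b<n. if cyc i (Suc b) < cyc i 0 \<and> odd (e (cyc i 0) * e (cyc i (Suc b))) then -1 else 1)
     = (\<Prod>b<n. if b < i \<and> odd (e i * e b) then -1 else (1::real))"
    by (rule prod.cong) (auto simp: cyc_def)
  have f2: "(\<Prod>(a,b)\<in>PP n. if cyc i (Suc b) < cyc i (Suc a) \<and> odd (e (cyc i (Suc a)) * e (cyc i (Suc b))) then -1 else 1) = (1::real)"
    by (rule prod.neutral) (auto simp: PP_def dest: mono)
  have "ks (Suc n) e (cyc i) = (\<Prod>b<n. if b < i \<and> odd (e i * e b) then -1 else 1)"
    unfolding ks_def prod_PP_Suc using f1 f2 by simp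
  also have "\<dots> = (\<Prod>b<i. if odd (e i * e b) then -1 else 1)"
    using assms by (intro prod.mono_neutral_cong_right) auto
  also have "\<dots> = (\<Prod>b<i. (-1::real) ^ (e i * e b))"
    by (simp only: minus1_pow_if)
  also have "\<dots> = (-1) ^ (\<Sum>b<i. e i * e b)" by (simp add: power_sum)
  finally show ?thesis by (simp add: sum_distrib_left)
qed

lemma decomp:
  assumes s: "\<sigma> permutes {..<Suc n}"
  obtains \<tau> where "\<tau> permutes {..<n}" "\<sigma> = cyc (\<sigma> 0) \<circ> ext \<tau>"
proof -
  let ?q = "\<sigma> 0"
  have q: "?q < Suc n" using permutes_in_image[OF s] by auto
  have c: "cyc ?q permutes {..<Suc n}" by (rule cyc_permutes[OF q])
  define \<pi> where "\<pi> = inv (cyc ?q) \<circ> \<sigma>"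
  have p: "\<pi> permutes {..<Suc n}" unfolding \<pi>_def by (rule permutes_compose[OF s permutes_inv[OF c]])
  have p0: "\<pi> 0 = 0" unfolding \<pi>_def using permutes_inv_eq[OF c] by (simp add: cyc_def)
  have injp: "\<pi> u = \<pi> v \<longleftrightarrow> u = v" for u v using permutes_inj[OF p] by (auto simp: inj_def)
  have pin: "u < Suc n \<Longrightarrow> \<pi> u < Suc n" for u using permutes_in_image[OF p] by auto
  have pout: "u \<ge> Suc n \<Longrightarrow> \<pi> u = u" for u using permutes_not_in[OF p] by auto
  have pnz: "\<pi> (Suc b) \<noteq> 0" for b using injp[of "Suc b" 0] p0 by auto
  define \<tau> where "\<tau> b = \<pi> (Suc b) - 1" for b
  have ext: "ext \<tau> = \<pi>"
  proof
    fix l show "ext \<tau> l = \<pi> l" using pnz[of "l - 1"] p0 by (cases l) (auto simp: ext_def \<tau>_def)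
  qed
  have "\<tau> permutes {..<n}"
  proof (rule bij_imp_permutes)
    have inj: "inj_on \<tau> {..<n}"
    proof (rule inj_onI)
      fix a b assume "\<tau> a = \<tau> b"
      then have "\<pi> (Suc a) = \<pi> (Suc b)" using pnz[of a] pnz[of b] unfolding \<tau>_def by arith
      then show "a = b" using injp by simp
    qed
    have sub: "\<tau> ` {..<n} \<subseteq> {..<n}" using pin pnz by (fastforce simp: \<tau>_def)
    show "bij_betw \<tau> {..<n} {..<n}" unfolding bij_betw_def
      using inj endo_inj_surj[OF _ sub inj] by auto
    show "x \<notin> {..<n} \<Longrightarrow> \<tau> x = x" for x using pout[of "Suc x"] by (auto simp: \<tau>_def)
  qed
  moreover have "\<sigma> = cyc ?q \<circ> ext \<tau>"
    unfolding ext \<pi>_def by (auto simp: fun_eq_iff permutes_inverses[OF c])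
  ultimately show ?thesis using that by blast
qed



declare upt_Suc[simp del]

locale dolb =
  fixes gr :: "nat \<Rightarrow> 'a::real_algebra_1 set" and D Db :: "'a \<Rightarrow> 'a"
  assumes A: "dolbeault_alg gr D Db"
begin

lemma gr_add: "x \<in> gr k \<Longrightarrow> y \<in> gr k \<Longrightarrow> x + y \<in> gr k" using A unfolding dolbeault_alg_def by metis
lemma gr_one: "1 \<in> gr 0" using A unfolding dolbeault_alg_def by metis
lemma gr_mult: "x \<in> gr k \<Longrightarrow> y \<in> gr l \<Longrightarrow> x * y \<in> gr (k + l)" using A unfolding dolbeault_alg_def by metis
lemma gr_comm: "x \<in> gr k \<Longrightarrow> y \<in> gr l \<Longrightarrow> x * y = ((-1::real) ^ (k * l)) *\<^sub>R (y * x)"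
  using A unfolding dolbeault_alg_def by metis
lemma D_add: "D (x + y) = D x + D y" using A unfolding dolbeault_alg_def by metis
lemma Db_add: "Db (x + y) = Db x + Db y" using A unfolding dolbeault_alg_def by metis
lemma D_scale: "D (c *\<^sub>R x) = c *\<^sub>R D x" using A unfolding dolbeault_alg_def by metis
lemma Db_scale: "Db (c *\<^sub>R x) = c *\<^sub>R Db x" using A unfolding dolbeault_alg_def by metis
lemma D_gr: "x \<in> gr k \<Longrightarrow> D x \<in> gr (k + 1)" using A unfolding dolbeault_alg_def by metis
lemma Db_gr: "x \<in> gr k \<Longrightarrow> Db x \<in> gr (k + 1)" using A unfolding dolbeault_alg_def by metis
lemma DD: "D (D x) = 0" using A unfolding dolbeault_alg_def by metis
lemma DbDb: "Db (Db x) = 0" using A unfolding dolbeault_alg_def by metis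
lemma DDb: "D (Db x) = - Db (D x)" using A unfolding dolbeault_alg_def by metis
lemma D_leib: "x \<in> gr k \<Longrightarrow> D (x * y) = D x * y + ((-1::real) ^ k) *\<^sub>R (x * D y)"
  using A unfolding dolbeault_alg_def by metis
lemma Db_leib: "x \<in> gr k \<Longrightarrow> Db (x * y) = Db x * y + ((-1::real) ^ k) *\<^sub>R (x * Db y)"
  using A unfolding dolbeault_alg_def by metis

lemma D_zero: "D 0 = 0" using D_add[of 0 0] by simp
lemma Db_zero: "Db 0 = 0" using Db_add[of 0 0] by simp
lemma D_sum: "D (\<Sum>i\<in>I. f i) = (\<Sum>i\<in>I. D (f i))"
  by (induction I rule: infinite_finite_induct) (auto simp: D_zero D_add)
lemma Db_sum: "Db (\<Sum>i\<in>I. f i) = (\<Sum>i\<in>I. Db (f i))"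
  by (induction I rule: infinite_finite_induct) (auto simp: Db_zero Db_add)

lemma prod_gr: "(\<And>l. l < n \<Longrightarrow> x l \<in> gr (e l)) \<Longrightarrow> prod_list (map x [0..<n]) \<in> gr (\<Sum>l<n. e l)"
proof (induction n)
  case 0 then show ?case using gr_one by simp
next
  case (Suc n)
  have "prod_list (map x [0..<n]) * x n \<in> gr ((\<Sum>l<n. e l) + e n)"
    using Suc by (intro gr_mult) auto
  then show ?case by (simp add: upt_Suc)
qed

lemma RLc:
  assumes q: "q < N" and x: "\<And>l. l < N \<Longrightarrow> x l \<in> gr (e l)"
  shows "prod_list (map (x \<circ> cyc q) [0..<N]) = ks N e (cyc q) *\<^sub>R prod_list (map x [0..<N])"
proof -
  obtain n where N: "N = Suc n" using q by (cases N) auto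
  have qn: "q \<le> n" using q N by simp
  have ap: "[a..<c] = [a..<b] @ [b..<c]" if "a \<le> b" "b \<le> c" for a b c
    using upt_add_eq_append[OF that(1), of "c - b"] that by simp
  have u2: "[0..<Suc n] = [0..<q] @ q # [Suc q..<Suc n]"
    using qn ap[of 0 q "Suc n"] upt_conv_Cons[of q "Suc n"] by simp
  have u1: "[0..<Suc n] = 0 # map Suc [0..<q] @ [Suc q..<Suc n]"
  proof -
    have "[0..<Suc n] = 0 # [1..<Suc n]" by (simp add: upt_conv_Cons)
    also have "[1..<Suc n] = [1..<Suc q] @ [Suc q..<Suc n]" using qn ap[of 1 "Suc q" "Suc n"] by simp
    also have "[1..<Suc q] = map Suc [0..<q]" by (simp add: map_Suc_upt)
    finally show ?thesis by simp
  qed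
  have m1: "map (x \<circ> cyc q) [Suc q..<Suc n] = map x [Suc q..<Suc n]"
    by (rule map_cong) (auto simp: cyc_def)
  have m2: "map (x \<circ> cyc q \<circ> Suc) [0..<q] = map x [0..<q]"
    by (rule map_cong) (auto simp: cyc_def)
  let ?P = "prod_list (map x [0..<q])"
  have Pg: "?P \<in> gr (\<Sum>l<q. e l)" using x q by (intro prod_gr) auto
  have comm: "x q * ?P = ((-1::real) ^ (e q * (\<Sum>l<q. e l))) *\<^sub>R (?P * x q)"
    using gr_comm[OF x[OF q] Pg] .
  have "prod_list (map (x \<circ> cyc q) [0..<N]) = x q * ?P * prod_list (map x [Suc q..<Suc n])"
  proof -
    have "map (x \<circ> cyc q) [0..<N] = (x \<circ> cyc q) 0 # map (x \<circ> cyc q \<circ> Suc) [0..<q] @ map (x \<circ> cyc q) [Suc q..<Suc n]"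
      unfolding N u1 by (simp only: list.map map_append map_map)
    also have "\<dots> = x q # map x [0..<q] @ map x [Suc q..<Suc n]" unfolding m1 m2 by (simp add: cyc_def)
    finally show ?thesis by (simp only: prod_list.Cons prod_list.append mult.assoc)
  qed
  also have "\<dots> = ((-1::real) ^ (e q * (\<Sum>l<q. e l))) *\<^sub>R (?P * x q * prod_list (map x [Suc q..<Suc n]))"
    by (simp add: comm)
  also have "?P * x q * prod_list (map x [Suc q..<Suc n]) = prod_list (map x [0..<N])"
    unfolding N u2 by (simp only: map_append list.map prod_list.Cons prod_list.append mult.assoc)
  finally show ?thesis unfolding N using ks_cyc[OF qn] by (simp add: o_def)
qed

lemma ext_0[simp]: "ext \<tau> 0 = 0" and ext_Suc[simp]: "ext \<tau> (Suc b) = Suc (\<tau> b)"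
  by (auto simp: ext_def)

lemma RL:
  assumes "\<sigma> permutes {..<n}" and "\<And>l. l < n \<Longrightarrow> x l \<in> gr (e l)"
  shows "prod_list (map (x \<circ> \<sigma>) [0..<n]) = ks n e \<sigma> *\<^sub>R prod_list (map x [0..<n])"
  using assms
proof (induction n arbitrary: x e \<sigma>)
  case 0 then show ?case by (simp add: ks_def PP_def)
next
  case (Suc n)
  obtain \<tau> where t: "\<tau> permutes {..<n}" and s: "\<sigma> = cyc (\<sigma> 0) \<circ> ext \<tau>"
    using decomp[OF Suc.prems(1)] by blast
  define q where "q = \<sigma> 0"
  have q: "q < Suc n" unfolding q_def using permutes_in_image[OF Suc.prems(1)] by auto
  have c: "cyc q permutes {..<Suc n}" by (rule cyc_permutes[OF q])
  have cin: "l < Suc n \<Longrightarrow> cyc q l < Suc n" for l using permutes_in_image[OF c] by auto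
  have IH: "prod_list (map ((x \<circ> cyc q \<circ> Suc) \<circ> \<tau>) [0..<n]) =
      ks n (e \<circ> cyc q \<circ> Suc) \<tau> *\<^sub>R prod_list (map (x \<circ> cyc q \<circ> Suc) [0..<n])"
    by (rule Suc.IH[OF t]) (use Suc.prems(2) cin in auto)
  have u: "[0..<Suc n] = 0 # map Suc [0..<n]" by (simp add: upt_conv_Cons map_Suc_upt)
  have "prod_list (map (x \<circ> \<sigma>) [0..<Suc n]) = x q * prod_list (map ((x \<circ> cyc q \<circ> Suc) \<circ> \<tau>) [0..<n])"
  proof -
    have "map (x \<circ> \<sigma>) [0..<Suc n] = (x \<circ> \<sigma>) 0 # map (x \<circ> \<sigma> \<circ> Suc) [0..<n]"
      unfolding u by (simp only: list.map map_map)
    also have "x \<circ> \<sigma> \<circ> Suc = (x \<circ> cyc q \<circ> Suc) \<circ> \<tau>"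
      by (subst s) (simp add: fun_eq_iff q_def)
    finally show ?thesis by (simp add: q_def o_def)
  qed
  also have "\<dots> = ks n (e \<circ> cyc q \<circ> Suc) \<tau> *\<^sub>R (x q * prod_list (map (x \<circ> cyc q \<circ> Suc) [0..<n]))"
    unfolding IH by simp
  also have "x q * prod_list (map (x \<circ> cyc q \<circ> Suc) [0..<n]) = prod_list (map (x \<circ> cyc q) [0..<Suc n])"
    unfolding u by (simp only: list.map map_map prod_list.Cons) (simp add: cyc_def)
  also have "\<dots> = ks (Suc n) e (cyc q) *\<^sub>R prod_list (map x [0..<Suc n])"
    by (rule RLc[OF q Suc.prems(2)])
  also have "ks (Suc n) e \<sigma> = ks (Suc n) e (cyc q) * ks n (e \<circ> cyc q \<circ> Suc) \<tau>"
    apply (subst s) unfolding q_def[symmetric]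
    using ks_comp[OF c ext_permutes[OF t], of e] ks_ext[of n "e \<circ> cyc q" \<tau>] by (simp add: o_assoc)
  ultimately show ?case by (simp add: mult.commute o_def)
qed

end


lemma Alt_add: "Alt n k (\<lambda>f g. F f g + G f g) \<phi> = Alt n k F \<phi> + Alt n k G \<phi>"
  unfolding Alt_def by (simp add: scaleR_add_right sum.distrib)

lemma Alt_scale: "Alt n k (\<lambda>f g. c *\<^sub>R F f g) \<phi> = c *\<^sub>R Alt n k F \<phi>"
  unfolding Alt_def by (simp add: scaleR_right.sum mult.commute)

lemma Alt_sum: "Alt n k (\<lambda>f g. \<Sum>j\<in>J. F j f g) \<phi> = (\<Sum>j\<in>J. Alt n k (F j) \<phi>)"
  unfolding Alt_def by (simp add: scaleR_right.sum sum.swap[of _ J])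

lemma Alt_cong:
  assumes "\<And>\<sigma>. \<sigma> permutes {..<n} \<Longrightarrow> F (\<phi> \<circ> \<sigma>) (k \<circ> \<sigma>) = G (\<phi> \<circ> \<sigma>) (k \<circ> \<sigma>)"
  shows "Alt n k F \<phi> = Alt n k G \<phi>"
  unfolding Alt_def by (rule sum.cong) (auto simp: assms)

lemma koszul_comp:
  assumes "\<sigma> permutes {..<n}" "\<tau> permutes {..<n}"
  shows "koszul_sign n k (\<sigma> \<circ> \<tau>) = koszul_sign n k \<sigma> * koszul_sign n (k \<circ> \<sigma>) \<tau>"
  unfolding koszul_ks using ks_comp[OF assms, of "\<lambda>i. k i + 1"] by (simp add: o_def)

lemma koszul_sq: "koszul_sign n k \<sigma> * koszul_sign n k \<sigma> = 1"
  unfolding koszul_sign_def by (simp add: power_add[symmetric])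

lemma Alt_reindex:
  assumes t: "\<tau> permutes {..<n}"
  shows "Alt n k F \<phi> = Alt n k (\<lambda>f g. koszul_sign n g \<tau> *\<^sub>R F (f \<circ> \<tau>) (g \<circ> \<tau>)) \<phi>"
proof -
  have "Alt n k F \<phi> = (\<Sum>\<sigma> | \<sigma> permutes {..<n}. koszul_sign n k (\<sigma> \<circ> \<tau>) *\<^sub>R F (\<phi> \<circ> (\<sigma> \<circ> \<tau>)) (k \<circ> (\<sigma> \<circ> \<tau>)))"
    unfolding Alt_def by (rule sum_permutations_compose_right[OF t])
  also have "\<dots> = Alt n k (\<lambda>f g. koszul_sign n g \<tau> *\<^sub>R F (f \<circ> \<tau>) (g \<circ> \<tau>)) \<phi>"
    unfolding Alt_def by (rule sum.cong) (auto simp: koszul_comp[OF _ t] o_assoc)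
  finally show ?thesis .
qed

lemma Alt_const:
  assumes "\<And>\<sigma>. \<sigma> permutes {..<n} \<Longrightarrow> F (\<phi> \<circ> \<sigma>) (k \<circ> \<sigma>) = koszul_sign n k \<sigma> *\<^sub>R c"
  shows "Alt n k F \<phi> = fact n *\<^sub>R c"
proof -
  have "Alt n k F \<phi> = (\<Sum>\<sigma> | \<sigma> permutes {..<n}. c)"
    unfolding Alt_def by (rule sum.cong) (auto simp: assms koszul_sq)
  also have "\<dots> = fact n *\<^sub>R c" using card_permutations[of "{..<n}" n] by (simp add: sum_constant_scaleR)
  finally show ?thesis .
qed

lemma koszul_ext: "koszul_sign (Suc m) g (ext \<tau>) = koszul_sign m (\<lambda>i. g (Suc i)) \<tau>"
  unfolding koszul_ks ks_ext by (simp add: o_def)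

lemma Alt_nested:
  fixes H :: "'a::real_algebra_1 \<Rightarrow> nat \<Rightarrow> 'a"
  shows "Alt (Suc m) k (\<lambda>f g. H (f 0) (g 0) * Alt m (\<lambda>i. g (Suc i)) G (\<lambda>i. f (Suc i))) \<phi>
   = fact m *\<^sub>R Alt (Suc m) k (\<lambda>f g. H (f 0) (g 0) * G (\<lambda>i. f (Suc i)) (\<lambda>i. g (Suc i))) \<phi>"
proof -
  let ?X = "\<lambda>f g. H (f 0) (g 0) * G (\<lambda>i. f (Suc i)) (\<lambda>i. g (Suc i))"
  have "Alt (Suc m) k (\<lambda>f g. H (f 0) (g 0) * Alt m (\<lambda>i. g (Suc i)) G (\<lambda>i. f (Suc i))) \<phi>
     = Alt (Suc m) k (\<lambda>f g. \<Sum>\<tau> | \<tau> permutes {..<m}. koszul_sign m (\<lambda>i. g (Suc i)) \<tau> *\<^sub>R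
            (H (f 0) (g 0) * G ((\<lambda>i. f (Suc i)) \<circ> \<tau>) ((\<lambda>i. g (Suc i)) \<circ> \<tau>))) \<phi>"
    unfolding Alt_def[of m] by (simp add: sum_distrib_left mult_scaleR_right)
  also have "\<dots> = (\<Sum>\<tau> | \<tau> permutes {..<m}. Alt (Suc m) k (\<lambda>f g. koszul_sign m (\<lambda>i. g (Suc i)) \<tau> *\<^sub>R
            (H (f 0) (g 0) * G ((\<lambda>i. f (Suc i)) \<circ> \<tau>) ((\<lambda>i. g (Suc i)) \<circ> \<tau>))) \<phi>)"
    by (rule Alt_sum)
  also have "\<dots> = (\<Sum>\<tau> | \<tau> permutes {..<m}. Alt (Suc m) k ?X \<phi>)"
  proof (rule sum.cong[OF refl])
    fix \<tau> assume "\<tau> \<in> {\<tau>. \<tau> permutes {..<m}}"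
    then have t: "ext \<tau> permutes {..<Suc m}" using ext_permutes by auto
    show "Alt (Suc m) k (\<lambda>f g. koszul_sign m (\<lambda>i. g (Suc i)) \<tau> *\<^sub>R
            (H (f 0) (g 0) * G ((\<lambda>i. f (Suc i)) \<circ> \<tau>) ((\<lambda>i. g (Suc i)) \<circ> \<tau>))) \<phi> = Alt (Suc m) k ?X \<phi>"
      unfolding Alt_reindex[OF t, of k ?X] koszul_ext by (simp add: o_def ext_def)
  qed
  also have "\<dots> = fact m *\<^sub>R Alt (Suc m) k ?X \<phi>" using card_permutations[of "{..<m}" m] by (simp only: sum_constant_scaleR) simp
  finally show ?thesis .
qed

context dolb begin

lemma D_Alt: "D (Alt n k F \<phi>) = Alt n k (\<lambda>f g. D (F f g)) \<phi>"
  unfolding Alt_def by (simp add: D_sum D_scale)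
lemma Db_Alt: "Db (Alt n k F \<phi>) = Alt n k (\<lambda>f g. Db (F f g)) \<phi>"
  unfolding Alt_def by (simp add: Db_sum Db_scale)

end


definition mnm :: "(nat \<Rightarrow> 'a \<Rightarrow> 'a) \<Rightarrow> (nat \<Rightarrow> 'a::real_algebra_1) \<Rightarrow> nat \<Rightarrow> 'a" where
  "mnm ops f n = prod_list (map (\<lambda>l. ops l (f l)) [0..<n])"

lemma mnm_cong: "(\<And>l. l < n \<Longrightarrow> ops l (f l) = ops' l (f' l)) \<Longrightarrow> mnm ops f n = mnm ops' f' n"
  unfolding mnm_def by (rule arg_cong[where f=prod_list], rule map_cong) auto

lemma slot_add:
  fixes x :: "nat \<Rightarrow> 'a::real_algebra_1"
  shows "distinct L \<Longrightarrow> i \<in> set L \<Longrightarrow>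
    prod_list (map (x(i := a + b)) L) = prod_list (map (x(i := a)) L) + prod_list (map (x(i := b)) L)"
proof (induction L)
  case Nil then show ?case by simp
next
  case (Cons l L)
  show ?case
  proof (cases "l = i")
    case True
    then have "i \<notin> set L" using Cons by auto
    then have eq: "prod_list (map (x(i := v)) L) = prod_list (map x L)" for v by (auto intro!: arg_cong[where f=prod_list] map_cong)
    show ?thesis using True by (simp only: list.map prod_list.Cons fun_upd_same eq distrib_right)
  next
    case False
    then show ?thesis using Cons by (simp add: distrib_left)
  qed
qed

lemma slot_scale:
  fixes x :: "nat \<Rightarrow> 'a::real_algebra_1"
  shows "distinct L \<Longrightarrow> i \<in> set L \<Longrightarrow>
    prod_list (map (x(i := c *\<^sub>R a)) L) = c *\<^sub>R prod_list (map (x(i := a)) L)"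
proof (induction L)
  case Nil then show ?case by simp
next
  case (Cons l L)
  show ?case
  proof (cases "l = i")
    case True
    then have "i \<notin> set L" using Cons by auto
    then have eq: "prod_list (map (x(i := v)) L) = prod_list (map x L)" for v by (auto intro!: arg_cong[where f=prod_list] map_cong)
    show ?thesis using True by (simp only: list.map prod_list.Cons fun_upd_same eq) simp
  next
    case False
    then show ?thesis using Cons by simp
  qed
qed

context dolb begin

definition dd where "dd x = D x + Db x"

lemma D_one: "D 1 = 0"
proof -
  have "D (1 * 1) = D 1 * 1 + 1 *\<^sub>R (1 * D 1)" using D_leib[OF gr_one, of 1] by simp
  then show ?thesis by simp
qed
lemma Db_one: "Db 1 = 0"
proof -
  have "Db (1 * 1) = Db 1 * 1 + 1 *\<^sub>R (1 * Db 1)" using Db_leib[OF gr_one, of 1] by simp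
  then show ?thesis by simp
qed

lemma dd_leib: "x \<in> gr k \<Longrightarrow> dd (x * y) = dd x * y + ((-1::real) ^ k) *\<^sub>R (x * dd y)"
  unfolding dd_def by (simp add: D_leib Db_leib distrib_left distrib_right scaleR_add_right)

lemma dd_sum: "dd (\<Sum>i\<in>I. f i) = (\<Sum>i\<in>I. dd (f i))"
  unfolding dd_def by (simp add: D_sum Db_sum sum.distrib)
lemma dd_scale: "dd (c *\<^sub>R x) = c *\<^sub>R dd x"
  unfolding dd_def by (simp add: D_scale Db_scale scaleR_add_right)
lemma dd_add: "dd (x + y) = dd x + dd y"
  unfolding dd_def by (simp add: D_add Db_add)

lemma dd_prod:
  "(\<And>l. l < n \<Longrightarrow> x l \<in> gr (e l)) \<Longrightarrow>
   dd (prod_list (map x [0..<n])) = (\<Sum>i<n. ((-1::real) ^ (\<Sum>l<i. e l)) *\<^sub>R prod_list (map (x(i := dd (x i))) [0..<n]))"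
proof (induction n)
  case 0 then show ?case by (simp add: dd_def D_one Db_one)
next
  case (Suc n)
  let ?P = "prod_list (map x [0..<n])"
  have Pg: "?P \<in> gr (\<Sum>l<n. e l)" using Suc.prems by (intro prod_gr) auto
  have m1: "map (x(i := v)) [0..<n] = map x [0..<n]" if "i \<ge> n" for i v using that by (auto intro: map_cong)
  have "dd (prod_list (map x [0..<Suc n])) = dd (?P * x n)" by (simp add: upt_Suc)
  also have "\<dots> = dd ?P * x n + ((-1::real) ^ (\<Sum>l<n. e l)) *\<^sub>R (?P * dd (x n))"
    by (rule dd_leib[OF Pg])
  also have "dd ?P * x n = (\<Sum>i<n. ((-1::real) ^ (\<Sum>l<i. e l)) *\<^sub>R prod_list (map (x(i := dd (x i))) [0..<Suc n]))"
  proof -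
    have IH: "dd ?P = (\<Sum>i<n. ((-1::real) ^ (\<Sum>l<i. e l)) *\<^sub>R prod_list (map (x(i := dd (x i))) [0..<n]))"
      by (rule Suc.IH) (use Suc.prems in auto)
    have "dd ?P * x n = (\<Sum>i<n. ((-1::real) ^ (\<Sum>l<i. e l)) *\<^sub>R (prod_list (map (x(i := dd (x i))) [0..<n]) * x n))"
      unfolding IH sum_distrib_right by simp
    also have "\<dots> = (\<Sum>i<n. ((-1::real) ^ (\<Sum>l<i. e l)) *\<^sub>R prod_list (map (x(i := dd (x i))) [0..<Suc n]))"
      by (rule sum.cong) (auto simp: upt_Suc)
    finally show ?thesis .
  qed
  also have "?P * dd (x n) = prod_list (map (x(n := dd (x n))) [0..<Suc n])"
    using m1[of n] by (simp add: upt_Suc)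
  finally show ?case by (simp only: sum.lessThan_Suc)
qed

end


lemma telescope:
  fixes u :: "nat \<Rightarrow> 'a::real_vector"
  shows "(\<Sum>j\<le>m. ((-1::real) ^ j) *\<^sub>R (u (Suc j) + u j)) = ((-1::real) ^ m) *\<^sub>R u (Suc m) + u 0"
proof (induction m)
  case 0 then show ?case by simp
next
  case (Suc m)
  then show ?case by (simp add: scaleR_add_right algebra_simps)
qed

lemma count_sum:
  fixes h :: "nat \<Rightarrow> 'a::real_vector"
  shows "(\<Sum>j\<le>m. \<Sum>i<m. h (if Suc i \<le> j then j - 1 else j)) = real (Suc m) *\<^sub>R (\<Sum>a<m. h a)"
proof -
  have inner: "(\<Sum>j\<le>m. h (if Suc i \<le> j then j - 1 else j)) = (\<Sum>a<m. h a) + h i" if "i < m" for i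
  proof -
    have "{..m} = {..i} \<union> {Suc i..m}" using that by auto
    then have "(\<Sum>j\<le>m. h (if Suc i \<le> j then j - 1 else j))
        = (\<Sum>j\<le>i. h (if Suc i \<le> j then j - 1 else j)) + (\<Sum>j\<in>{Suc i..m}. h (if Suc i \<le> j then j - 1 else j))"
      by (simp add: sum.union_disjoint ivl_disj_int)
    also have "(\<Sum>j\<le>i. h (if Suc i \<le> j then j - 1 else j)) = (\<Sum>j\<le>i. h j)" by (rule sum.cong) auto
    also have "(\<Sum>j\<in>{Suc i..m}. h (if Suc i \<le> j then j - 1 else j)) = (\<Sum>j\<in>{Suc i..m}. h (j - 1))"
      by (rule sum.cong) auto
    also have "\<dots> = (\<Sum>a\<in>{i..<m}. h a)"
    proof -
      have e: "{Suc i..m} = Suc ` {i..<m}" using that by (auto simp: image_iff intro!: exI[of _ "_ - 1"])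
      show ?thesis unfolding e by (subst sum.reindex) auto
    qed
    also have "(\<Sum>j\<le>i. h j) = (\<Sum>a<i. h a) + h i" by (simp add: lessThan_Suc_atMost[symmetric])
    also have "(\<Sum>a<i. h a) + h i + (\<Sum>a\<in>{i..<m}. h a) = (\<Sum>a<m. h a) + h i"
    proof -
      have "(\<Sum>a<i. h a) + (\<Sum>a\<in>{i..<m}. h a) = (\<Sum>a<m. h a)"
      proof -
        have e2: "{..<m} = {..<i} \<union> {i..<m}" using that by auto
        show ?thesis unfolding e2 by (rule sum.union_disjoint[symmetric]) auto
      qed
      then show ?thesis by (simp add: algebra_simps)
    qed
    finally show ?thesis .
  qed
  have "(\<Sum>j\<le>m. \<Sum>i<m. h (if Suc i \<le> j then j - 1 else j)) = (\<Sum>i<m. \<Sum>j\<le>m. h (if Suc i \<le> j then j - 1 else j))"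
    by (rule sum.swap)
  also have "\<dots> = (\<Sum>i<m. (\<Sum>a<m. h a) + h i)" by (rule sum.cong) (auto simp: inner)
  also have "\<dots> = real m *\<^sub>R (\<Sum>a<m. h a) + (\<Sum>a<m. h a)" by (simp add: sum.distrib sum_constant_scaleR)
  finally show ?thesis by (simp add: algebra_simps)
qed

lemma sign_id:
  fixes G E :: nat and s :: real
  shows "(-1::real) ^ ((G + 1) * (E + 1)) * (- s * (-1) ^ G) * (-1) ^ ((G + 2) * E) = (-1) ^ E * s"
proof -
  have "(G + 1) * (E + 1) + G + (G + 2) * E = 2 * (G * E + G + E) + (E + 1)" by (simp add: algebra_simps)
  note eq = this
  have "(-1::real) ^ ((G + 1) * (E + 1)) * (-1) ^ G * (-1) ^ ((G + 2) * E) = (-1) ^ ((G + 1) * (E + 1) + G + (G + 2) * E)"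
    by (simp add: power_add)
  also have "\<dots> = (-1) ^ (2 * (G * E + G + E) + (E + 1))" unfolding eq ..
  also have "\<dots> = - ((-1) ^ E)" by (simp add: power_add power_mult)
  finally have "(-1::real) ^ ((G + 1) * (E + 1)) * (-1) ^ G * (-1) ^ ((G + 2) * E) = - ((-1) ^ E)" .
  then show ?thesis by (simp add: algebra_simps)
qed

context dolb begin

definition opsF :: "nat \<Rightarrow> nat \<Rightarrow> 'a \<Rightarrow> 'a" where
  "opsF j l = (if l = 0 then id else if l \<le> j then D else Db)"
definition pat :: "nat \<Rightarrow> nat \<Rightarrow> 'a \<Rightarrow> 'a" where
  "pat c l = (if l < c then D else Db)"
definition opsZ :: "nat \<Rightarrow> nat \<Rightarrow> 'a \<Rightarrow> 'a" where
  "opsZ a l = (if l = 0 then (\<lambda>x. Db (D x)) else opsF a (l - 1))"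
definition opsC :: "nat \<Rightarrow> nat \<Rightarrow> nat \<Rightarrow> 'a \<Rightarrow> 'a" where
  "opsC i j = (opsF j)(Suc i := (\<lambda>x. Db (D x)))"

lemma mnm_cyc:
  assumes "q < n" "\<And>l. l < n \<Longrightarrow> ops l (f l) \<in> gr (e l)"
  shows "mnm (ops \<circ> cyc q) (f \<circ> cyc q) n = ks n e (cyc q) *\<^sub>R mnm ops f n"
  using RLc[OF assms(1), of "\<lambda>l. ops l (f l)" e] assms(2) unfolding mnm_def by (simp add: o_def)

lemma omega_mnm:
  "omega D Db m k \<phi> = (1 / fact (Suc m)) *\<^sub>R Alt (Suc m) k (\<lambda>f g. \<Sum>j\<le>m. ((-1::real) ^ j) *\<^sub>R mnm (opsF j) f (Suc m)) \<phi>"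
proof -
  have ap: "[a..<c] = [a..<b] @ [b..<c]" if "a \<le> b" "b \<le> c" for a b c
    using upt_add_eq_append[OF that(1), of "c - b"] that by simp
  have eq: "f 0 * prod_list (map (\<lambda>i. D (f i)) [1..<j + 1]) * prod_list (map (\<lambda>i. Db (f i)) [j + 1..<m + 1])
      = mnm (opsF j) f (Suc m)" if "j \<le> m" for f j
  proof -
    have u: "[0..<Suc m] = 0 # [1..<j + 1] @ [j + 1..<m + 1]"
      using that ap[of 1 "j+1" "Suc m"] by (simp add: upt_conv_Cons)
    have m1: "map (\<lambda>l. opsF j l (f l)) [1..<j + 1] = map (\<lambda>i. D (f i)) [1..<j + 1]"
      by (rule map_cong) (auto simp: opsF_def)
    have m2: "map (\<lambda>l. opsF j l (f l)) [j+1..<m + 1] = map (\<lambda>i. Db (f i)) [j+1..<m + 1]"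
      by (rule map_cong) (auto simp: opsF_def)
    show ?thesis unfolding mnm_def u
      by (simp only: list.map map_append prod_list.Cons prod_list.append m1 m2) (simp add: opsF_def mult.assoc)
  qed
  show ?thesis unfolding omega_def
    by (simp only: Suc_eq_plus1[symmetric]) (rule arg_cong[where f="\<lambda>F. _ *\<^sub>R Alt _ _ F _"], auto intro!: sum.cong simp: eq eq[simplified])
qed

end


definition EE :: "(nat \<Rightarrow> nat) \<Rightarrow> nat \<Rightarrow> nat" where
  "EE g i = (\<Sum>l<i. if l = 0 then g 0 else g l + 1)"
definition sg :: "nat \<Rightarrow> nat \<Rightarrow> real" where
  "sg i j = (if Suc i \<le> j then 1 else -1)"
definition aa :: "nat \<Rightarrow> nat \<Rightarrow> nat" where
  "aa i j = (if Suc i \<le> j then j - 1 else j)"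

lemma sum_shift1: "(\<Sum>l<Suc i. g l + 1) = EE g (Suc i) + 1"
  unfolding EE_def sum.lessThan_Suc_shift by simp

lemma sign_aa: "i < m \<Longrightarrow> ((-1::real) ^ j) * (- sg i j) = (-1) ^ (aa i j)"
  by (cases j) (auto simp: sg_def aa_def)

context dolb begin

lemma dF_expand:
  assumes f: "\<And>l. l < Suc m \<Longrightarrow> f l \<in> gr (g l)"
  shows "dd (\<Sum>j\<le>m. ((-1::real) ^ j) *\<^sub>R mnm (opsF j) f (Suc m)) =
    (\<Sum>j\<le>m. ((-1::real) ^ j) *\<^sub>R (mnm (pat (Suc j)) f (Suc m) + mnm (pat j \<circ> cyc j) f (Suc m)
        + (\<Sum>i<m. ((-1::real) ^ (EE g (Suc i)) * sg i j) *\<^sub>R mnm (opsC i j) f (Suc m))))"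
  unfolding dd_sum dd_scale
proof (rule sum.cong[OF refl])
  fix j assume "j \<in> {..m}"
  define x where "x l = opsF j l (f l)" for l
  define e where "e l = (if l = 0 then g 0 else g l + 1)" for l
  have xg: "x l \<in> gr (e l)" if "l < Suc m" for l
    using f[OF that] D_gr Db_gr by (auto simp: x_def e_def opsF_def)
  have di: "distinct [0..<Suc m]" by simp
  have "dd (mnm (opsF j) f (Suc m)) = (\<Sum>i<Suc m. ((-1::real) ^ (\<Sum>l<i. e l)) *\<^sub>R prod_list (map (x(i := dd (x i))) [0..<Suc m]))"
    unfolding mnm_def x_def[symmetric] by (rule dd_prod[OF xg])
  also have "\<dots> = prod_list (map (x(0 := dd (x 0))) [0..<Suc m]) +
      (\<Sum>i<m. ((-1::real) ^ (EE g (Suc i))) *\<^sub>R prod_list (map (x(Suc i := dd (x (Suc i)))) [0..<Suc m]))"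
  proof -
    have ee: "sum e {..<Suc i} = EE g (Suc i)" for i unfolding EE_def e_def ..
    show ?thesis unfolding sum.lessThan_Suc_shift[of "\<lambda>i. ((-1::real) ^ (\<Sum>l<i. e l)) *\<^sub>R prod_list (map (x(i := dd (x i))) [0..<Suc m])"] ee
      by simp
  qed
  also have "prod_list (map (x(0 := dd (x 0))) [0..<Suc m]) = mnm (pat (Suc j)) f (Suc m) + mnm (pat j \<circ> cyc j) f (Suc m)"
  proof -
    have "dd (x 0) = D (f 0) + Db (f 0)" by (simp add: x_def opsF_def dd_def)
    then have "prod_list (map (x(0 := dd (x 0))) [0..<Suc m]) = prod_list (map (x(0 := D (f 0))) [0..<Suc m]) + prod_list (map (x(0 := Db (f 0))) [0..<Suc m])"
      using slot_add[OF di, of 0 x] by simp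
    also have "prod_list (map (x(0 := D (f 0))) [0..<Suc m]) = mnm (pat (Suc j)) f (Suc m)"
      unfolding mnm_def by (rule arg_cong[where f=prod_list], rule map_cong) (auto simp: x_def opsF_def pat_def)
    also have "prod_list (map (x(0 := Db (f 0))) [0..<Suc m]) = mnm (pat j \<circ> cyc j) f (Suc m)"
      unfolding mnm_def by (rule arg_cong[where f=prod_list], rule map_cong) (auto simp: x_def opsF_def pat_def cyc_def)
    finally show ?thesis .
  qed
  also have "(\<Sum>i<m. ((-1::real) ^ (EE g (Suc i))) *\<^sub>R prod_list (map (x(Suc i := dd (x (Suc i)))) [0..<Suc m]))
     = (\<Sum>i<m. ((-1::real) ^ (EE g (Suc i)) * sg i j) *\<^sub>R mnm (opsC i j) f (Suc m))"
  proof (rule sum.cong[OF refl])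
    fix i assume i: "i \<in> {..<m}"
    have "dd (x (Suc i)) = sg i j *\<^sub>R Db (D (f (Suc i)))"
      by (simp add: x_def opsF_def dd_def sg_def DD DbDb DDb)
    then have "prod_list (map (x(Suc i := dd (x (Suc i)))) [0..<Suc m]) = sg i j *\<^sub>R prod_list (map (x(Suc i := Db (D (f (Suc i))))) [0..<Suc m])"
      using slot_scale[OF di, of "Suc i" x] i by simp
    also have "prod_list (map (x(Suc i := Db (D (f (Suc i))))) [0..<Suc m]) = mnm (opsC i j) f (Suc m)"
      unfolding mnm_def by (rule arg_cong[where f=prod_list], rule map_cong) (auto simp: x_def opsC_def)
    finally show "((-1::real) ^ (EE g (Suc i))) *\<^sub>R prod_list (map (x(Suc i := dd (x (Suc i)))) [0..<Suc m])
       = ((-1::real) ^ (EE g (Suc i)) * sg i j) *\<^sub>R mnm (opsC i j) f (Suc m)" by (simp only: scaleR_scaleR)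
  qed
  finally show "((-1::real) ^ j) *\<^sub>R dd (mnm (opsF j) f (Suc m)) = ((-1::real) ^ j) *\<^sub>R (mnm (pat (Suc j)) f (Suc m) + mnm (pat j \<circ> cyc j) f (Suc m)
        + (\<Sum>i<m. ((-1::real) ^ (EE g (Suc i)) * sg i j) *\<^sub>R mnm (opsC i j) f (Suc m)))" by (simp add: o_def)
qed

lemma perm_gr:
  assumes "\<forall>l<n. \<phi> l \<in> gr (k l)" "\<sigma> permutes {..<n}" "l < n"
  shows "(\<phi> \<circ> \<sigma>) l \<in> gr ((k \<circ> \<sigma>) l)"
  using assms permutes_in_image[OF assms(2)] by auto

lemma P2:
  assumes \<phi>: "\<forall>l<n. \<phi> l \<in> gr (k l)" and j: "j < n"
  shows "Alt n k (\<lambda>f g. mnm (pat j \<circ> cyc j) f n) \<phi> = Alt n k (\<lambda>f g. mnm (pat j) f n) \<phi>"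
proof -
  have c: "cyc j permutes {..<n}" by (rule cyc_permutes[OF j])
  have "Alt n k (\<lambda>f g. mnm (pat j \<circ> cyc j) f n) \<phi> = Alt n k (\<lambda>f g. koszul_sign n g (cyc j) *\<^sub>R mnm (pat j \<circ> cyc j) (f \<circ> cyc j) n) \<phi>"
    by (rule Alt_reindex[OF c])
  also have "\<dots> = Alt n k (\<lambda>f g. mnm (pat j) f n) \<phi>"
  proof (rule Alt_cong)
    fix \<sigma> assume s: "\<sigma> permutes {..<n}"
    have "mnm (pat j \<circ> cyc j) ((\<phi> \<circ> \<sigma>) \<circ> cyc j) n = ks n (\<lambda>l. (k \<circ> \<sigma>) l + 1) (cyc j) *\<^sub>R mnm (pat j) (\<phi> \<circ> \<sigma>) n"
      by (rule mnm_cyc[OF j]) (use perm_gr[OF \<phi> s] D_gr Db_gr in \<open>auto simp: pat_def\<close>)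
    then show "koszul_sign n (k \<circ> \<sigma>) (cyc j) *\<^sub>R mnm (pat j \<circ> cyc j) ((\<phi> \<circ> \<sigma>) \<circ> cyc j) n = mnm (pat j) (\<phi> \<circ> \<sigma>) n"
      using koszul_sq[of n "k \<circ> \<sigma>" "cyc j"] koszul_ks[of n "k \<circ> \<sigma>" "cyc j"] by (simp add: o_def)
  qed
  finally show ?thesis .
qed

lemma P4:
  assumes \<phi>: "\<forall>l<n. \<phi> l \<in> gr (k l)" and T: "\<And>x kk. x \<in> gr kk \<Longrightarrow> T x \<in> gr (kk + 1)"
    and ops: "\<And>l. l < n \<Longrightarrow> ops l = T"
  shows "Alt n k (\<lambda>f g. mnm ops f n) \<phi> = fact n *\<^sub>R mnm (\<lambda>_. T) \<phi> n"
proof (rule Alt_const)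
  fix \<sigma> assume s: "\<sigma> permutes {..<n}"
  have "mnm ops (\<phi> \<circ> \<sigma>) n = prod_list (map ((\<lambda>l. T (\<phi> l)) \<circ> \<sigma>) [0..<n])"
    unfolding mnm_def by (rule arg_cong[where f=prod_list], rule map_cong) (auto simp: ops)
  also have "\<dots> = ks n (\<lambda>l. k l + 1) \<sigma> *\<^sub>R prod_list (map (\<lambda>l. T (\<phi> l)) [0..<n])"
    by (rule RL[OF s]) (use \<phi> T in auto)
  finally show "mnm ops (\<phi> \<circ> \<sigma>) n = koszul_sign n k \<sigma> *\<^sub>R mnm (\<lambda>_. T) \<phi> n"
    by (simp add: koszul_ks mnm_def)
qed

lemma opsZ_cyc:
  assumes "i < m" "j \<le> m" "l < Suc m"
  shows "opsZ (aa i j) l = opsC i j (cyc (Suc i) l)"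
  using assms by (auto simp: opsZ_def opsC_def opsF_def cyc_def aa_def)

lemma P3:
  assumes \<phi>: "\<forall>l<Suc m. \<phi> l \<in> gr (k l)" and i: "i < m" and j: "j \<le> m"
  shows "Alt (Suc m) k (\<lambda>f g. ((-1::real) ^ (EE g (Suc i)) * sg i j) *\<^sub>R mnm (opsC i j) f (Suc m)) \<phi>
     = (- sg i j) *\<^sub>R Alt (Suc m) k (\<lambda>f g. ((-1::real) ^ (g 0)) *\<^sub>R mnm (opsZ (aa i j)) f (Suc m)) \<phi>"
proof -
  let ?c = "cyc (Suc i)"
  have si: "Suc i < Suc m" using i by simp
  have c: "?c permutes {..<Suc m}" by (rule cyc_permutes[OF si])
  have "(- sg i j) *\<^sub>R Alt (Suc m) k (\<lambda>f g. ((-1::real) ^ (g 0)) *\<^sub>R mnm (opsZ (aa i j)) f (Suc m)) \<phi>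
    = Alt (Suc m) k (\<lambda>f g. (- sg i j * (-1::real) ^ (g 0)) *\<^sub>R mnm (opsZ (aa i j)) f (Suc m)) \<phi>"
    by (simp add: Alt_scale[symmetric])
  also have "\<dots> = Alt (Suc m) k (\<lambda>f g. koszul_sign (Suc m) g ?c *\<^sub>R ((- sg i j * (-1::real) ^ ((g \<circ> ?c) 0)) *\<^sub>R mnm (opsZ (aa i j)) (f \<circ> ?c) (Suc m))) \<phi>"
    by (rule Alt_reindex[OF c])
  also have "\<dots> = Alt (Suc m) k (\<lambda>f g. ((-1::real) ^ (EE g (Suc i)) * sg i j) *\<^sub>R mnm (opsC i j) f (Suc m)) \<phi>"
  proof (rule Alt_cong)
    fix \<sigma> assume s: "\<sigma> permutes {..<Suc m}"
    define f where "f = \<phi> \<circ> \<sigma>"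
    define g where "g = k \<circ> \<sigma>"
    have fg: "f l \<in> gr (g l)" if "l < Suc m" for l using perm_gr[OF \<phi> s that] by (simp add: f_def g_def)
    define eC where "eC l = (if l = 0 then g 0 else if l = Suc i then g l + 2 else g l + 1)" for l
    have eCg: "opsC i j l (f l) \<in> gr (eC l)" if "l < Suc m" for l
      using fg[OF that] D_gr Db_gr by (auto simp: opsC_def opsF_def eC_def numeral_2_eq_2)
    have "mnm (opsZ (aa i j)) (f \<circ> ?c) (Suc m) = mnm (opsC i j \<circ> ?c) (f \<circ> ?c) (Suc m)"
      by (rule mnm_cong) (simp add: opsZ_cyc[OF i j])
    also have "\<dots> = ks (Suc m) eC ?c *\<^sub>R mnm (opsC i j) f (Suc m)"
      by (rule mnm_cyc[OF si]) (rule eCg)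
    also have "ks (Suc m) eC ?c = (-1) ^ ((g (Suc i) + 2) * EE g (Suc i))"
    proof -
      have "(\<Sum>l<Suc i. eC l) = EE g (Suc i)" unfolding EE_def by (rule sum.cong) (auto simp: eC_def)
      then show ?thesis using ks_cyc[of "Suc i" m eC] i by (simp add: eC_def)
    qed
    finally have M: "mnm (opsZ (aa i j)) (f \<circ> ?c) (Suc m) = (-1) ^ ((g (Suc i) + 2) * EE g (Suc i)) *\<^sub>R mnm (opsC i j) f (Suc m)" .
    have K: "koszul_sign (Suc m) g ?c = (-1) ^ ((g (Suc i) + 1) * (EE g (Suc i) + 1))"
      unfolding koszul_ks using ks_cyc[of "Suc i" m "\<lambda>l. g l + 1"] i sum_shift1[of g i] by simp
    have c0: "(g \<circ> ?c) 0 = g (Suc i)" by (simp add: cyc_def)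
    show "koszul_sign (Suc m) (k \<circ> \<sigma>) ?c *\<^sub>R ((- sg i j * (-1::real) ^ (((k \<circ> \<sigma>) \<circ> ?c) 0)) *\<^sub>R mnm (opsZ (aa i j)) ((\<phi> \<circ> \<sigma>) \<circ> ?c) (Suc m))
        = ((-1::real) ^ (EE (k \<circ> \<sigma>) (Suc i)) * sg i j) *\<^sub>R mnm (opsC i j) (\<phi> \<circ> \<sigma>) (Suc m)"
      unfolding f_def[symmetric] g_def[symmetric] M K c0
      using sign_id[of "g (Suc i)" "EE g (Suc i)" "sg i j"] by (simp add: mult.assoc)
  qed
  finally show ?thesis by simp
qed

lemma mnm_opsZ: "mnm (opsZ a) f (Suc m) = Db (D (f 0)) * mnm (opsF a) (\<lambda>i. f (Suc i)) m"
proof -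
  have u: "[0..<Suc m] = 0 # map Suc [0..<m]" by (simp add: upt_conv_Cons map_Suc_upt)
  show ?thesis unfolding mnm_def u by (simp add: opsZ_def o_def)
qed

end


context dolb begin

lemma main:
  assumes m1: "m \<ge> 1" and \<phi>: "\<forall>i\<le>m. \<phi> i \<in> gr (k i)"
  shows "D (omega D Db m k \<phi>) + Db (omega D Db m k \<phi>) =
     ((-1::real) ^ m) *\<^sub>R prod_list (map (\<lambda>i. D (\<phi> i)) [0..<m + 1])
     + prod_list (map (\<lambda>i. Db (\<phi> i)) [0..<m + 1])
     + (1 / fact m) *\<^sub>R Alt (m + 1) k
         (\<lambda>f g. ((-1::real) ^ g 0) *\<^sub>R
            (Db (D (f 0)) * omega D Db (m - 1) (\<lambda>i. g (i + 1)) (\<lambda>i. f (i + 1)))) \<phi>"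
proof -
  have \<phi>': "\<forall>l<Suc m. \<phi> l \<in> gr (k l)" using \<phi> by auto
  define n where "n = Suc m"
  define Y where "Y a = Alt (Suc m) k (\<lambda>f g. ((-1::real) ^ (g 0)) *\<^sub>R mnm (opsZ a) f (Suc m)) \<phi>" for a
  define h where "h a = ((-1::real) ^ a) *\<^sub>R Y a" for a
  define AP where "AP c = Alt (Suc m) k (\<lambda>f g. mnm (pat c) f (Suc m)) \<phi>" for c
  define F where "F f = (\<Sum>j\<le>m. ((-1::real) ^ j) *\<^sub>R mnm (opsF j) f (Suc m))" for f
  have L1: "D (omega D Db m k \<phi>) + Db (omega D Db m k \<phi>) = (1 / fact (Suc m)) *\<^sub>R Alt (Suc m) k (\<lambda>f g. dd (F f)) \<phi>"
    unfolding omega_mnm F_def D_scale Db_scale D_Alt Db_Alt dd_def Alt_add scaleR_add_right ..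
  have L2: "Alt (Suc m) k (\<lambda>f g. dd (F f)) \<phi> = Alt (Suc m) k (\<lambda>f g. \<Sum>j\<le>m. ((-1::real) ^ j) *\<^sub>R (mnm (pat (Suc j)) f (Suc m) + mnm (pat j \<circ> cyc j) f (Suc m)
        + (\<Sum>i<m. ((-1::real) ^ (EE g (Suc i)) * sg i j) *\<^sub>R mnm (opsC i j) f (Suc m)))) \<phi>"
  proof (rule Alt_cong)
    fix \<sigma> assume s: "\<sigma> permutes {..<Suc m}"
    show "dd (F (\<phi> \<circ> \<sigma>)) = (\<Sum>j\<le>m. ((-1::real) ^ j) *\<^sub>R (mnm (pat (Suc j)) (\<phi> \<circ> \<sigma>) (Suc m) + mnm (pat j \<circ> cyc j) (\<phi> \<circ> \<sigma>) (Suc m)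
        + (\<Sum>i<m. ((-1::real) ^ (EE (k \<circ> \<sigma>) (Suc i)) * sg i j) *\<^sub>R mnm (opsC i j) (\<phi> \<circ> \<sigma>) (Suc m))))"
      unfolding F_def by (rule dF_expand) (rule perm_gr[OF \<phi>' s])
  qed
  have L3: "Alt (Suc m) k (\<lambda>f g. \<Sum>j\<le>m. ((-1::real) ^ j) *\<^sub>R (mnm (pat (Suc j)) f (Suc m) + mnm (pat j \<circ> cyc j) f (Suc m)
        + (\<Sum>i<m. ((-1::real) ^ (EE g (Suc i)) * sg i j) *\<^sub>R mnm (opsC i j) f (Suc m)))) \<phi>
      = (\<Sum>j\<le>m. ((-1::real) ^ j) *\<^sub>R (AP (Suc j) + AP j)) + (\<Sum>j\<le>m. \<Sum>i<m. h (aa i j))"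
  proof -
    have "Alt (Suc m) k (\<lambda>f g. \<Sum>j\<le>m. ((-1::real) ^ j) *\<^sub>R (mnm (pat (Suc j)) f (Suc m) + mnm (pat j \<circ> cyc j) f (Suc m)
        + (\<Sum>i<m. ((-1::real) ^ (EE g (Suc i)) * sg i j) *\<^sub>R mnm (opsC i j) f (Suc m)))) \<phi>
      = (\<Sum>j\<le>m. ((-1::real) ^ j) *\<^sub>R (AP (Suc j) + Alt (Suc m) k (\<lambda>f g. mnm (pat j \<circ> cyc j) f (Suc m)) \<phi>
        + (\<Sum>i<m. Alt (Suc m) k (\<lambda>f g. ((-1::real) ^ (EE g (Suc i)) * sg i j) *\<^sub>R mnm (opsC i j) f (Suc m)) \<phi>)))"
      unfolding AP_def by (simp only: Alt_sum Alt_scale Alt_add)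
    also have "\<dots> = (\<Sum>j\<le>m. ((-1::real) ^ j) *\<^sub>R (AP (Suc j) + AP j) + (\<Sum>i<m. h (aa i j)))"
    proof (rule sum.cong[OF refl])
      fix j assume j: "j \<in> {..m}"
      have p2: "Alt (Suc m) k (\<lambda>f g. mnm (pat j \<circ> cyc j) f (Suc m)) \<phi> = AP j"
        unfolding AP_def by (rule P2[OF \<phi>']) (use j in auto)
      have p3: "(\<Sum>i<m. Alt (Suc m) k (\<lambda>f g. ((-1::real) ^ (EE g (Suc i)) * sg i j) *\<^sub>R mnm (opsC i j) f (Suc m)) \<phi>)
         = (\<Sum>i<m. (- sg i j) *\<^sub>R Y (aa i j))"
        unfolding Y_def by (rule sum.cong[OF refl]) (rule P3[OF \<phi>'], use j in auto)
      have p4: "((-1::real) ^ j) *\<^sub>R (\<Sum>i<m. (- sg i j) *\<^sub>R Y (aa i j)) = (\<Sum>i<m. h (aa i j))"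
        unfolding h_def scaleR_right.sum
      proof (rule sum.cong[OF refl])
        fix i assume "i \<in> {..<m}"
        then have i: "i < m" by simp
        show "((-1::real) ^ j) *\<^sub>R ((- sg i j) *\<^sub>R Y (aa i j)) = ((-1::real) ^ aa i j) *\<^sub>R Y (aa i j)"
          by (simp only: scaleR_scaleR sign_aa[OF i])
      qed
      show "((-1::real) ^ j) *\<^sub>R (AP (Suc j) + Alt (Suc m) k (\<lambda>f g. mnm (pat j \<circ> cyc j) f (Suc m)) \<phi>
        + (\<Sum>i<m. Alt (Suc m) k (\<lambda>f g. ((-1::real) ^ (EE g (Suc i)) * sg i j) *\<^sub>R mnm (opsC i j) f (Suc m)) \<phi>))
        = ((-1::real) ^ j) *\<^sub>R (AP (Suc j) + AP j) + (\<Sum>i<m. h (aa i j))"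
        unfolding p2 p3 p4[symmetric] by (simp only: scaleR_add_right)
    qed
    also have "\<dots> = (\<Sum>j\<le>m. ((-1::real) ^ j) *\<^sub>R (AP (Suc j) + AP j)) + (\<Sum>j\<le>m. \<Sum>i<m. h (aa i j))"
      by (rule sum.distrib)
    finally show ?thesis .
  qed
  have L4: "(\<Sum>j\<le>m. ((-1::real) ^ j) *\<^sub>R (AP (Suc j) + AP j)) =
      ((-1::real) ^ m) *\<^sub>R (fact (Suc m) *\<^sub>R mnm (\<lambda>_. D) \<phi> (Suc m)) + fact (Suc m) *\<^sub>R mnm (\<lambda>_. Db) \<phi> (Suc m)"
  proof -
    have a1: "AP (Suc m) = fact (Suc m) *\<^sub>R mnm (\<lambda>_. D) \<phi> (Suc m)"
      unfolding AP_def by (rule P4[OF \<phi>']) (auto simp: D_gr[simplified] pat_def)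
    have a0: "AP 0 = fact (Suc m) *\<^sub>R mnm (\<lambda>_. Db) \<phi> (Suc m)"
      unfolding AP_def by (rule P4[OF \<phi>']) (auto simp: Db_gr[simplified] pat_def)
    show ?thesis unfolding telescope a1 a0 ..
  qed
  have L5: "(\<Sum>j\<le>m. \<Sum>i<m. h (aa i j)) = real (Suc m) *\<^sub>R (\<Sum>a<m. h a)"
    unfolding aa_def by (rule count_sum)
  have L6: "Alt (m + 1) k (\<lambda>f g. ((-1::real) ^ g 0) *\<^sub>R
            (Db (D (f 0)) * omega D Db (m - 1) (\<lambda>i. g (i + 1)) (\<lambda>i. f (i + 1)))) \<phi>
      = (\<Sum>a<m. h a)"
  proof -
    define G where "G f g = (\<Sum>j\<le>m - 1. ((-1::real) ^ j) *\<^sub>R mnm (opsF j) f m)" for f :: "nat \<Rightarrow> 'a" and g :: "nat \<Rightarrow> nat"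
    define H where "H x b = ((-1::real) ^ b) *\<^sub>R Db (D x)" for x b
    have sm: "Suc (m - 1) = m" using m1 by simp
    have om: "omega D Db (m - 1) g' f' = (1 / fact m) *\<^sub>R Alt m g' G f'" for g' f'
      using omega_mnm[of "m - 1" g' f'] unfolding sm G_def by simp
    have "Alt (m + 1) k (\<lambda>f g. ((-1::real) ^ g 0) *\<^sub>R
            (Db (D (f 0)) * omega D Db (m - 1) (\<lambda>i. g (i + 1)) (\<lambda>i. f (i + 1)))) \<phi>
       = Alt (Suc m) k (\<lambda>f g. (1 / fact m) *\<^sub>R (H (f 0) (g 0) * Alt m (\<lambda>i. g (Suc i)) G (\<lambda>i. f (Suc i)))) \<phi>"
      unfolding om H_def by simp
    also have "\<dots> = (1 / fact m) *\<^sub>R fact m *\<^sub>R Alt (Suc m) k (\<lambda>f g. H (f 0) (g 0) * G (\<lambda>i. f (Suc i)) (\<lambda>i. g (Suc i))) \<phi>"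
      unfolding Alt_scale Alt_nested ..
    also have "Alt (Suc m) k (\<lambda>f g. H (f 0) (g 0) * G (\<lambda>i. f (Suc i)) (\<lambda>i. g (Suc i))) \<phi>
       = Alt (Suc m) k (\<lambda>f g. \<Sum>a<m. ((-1::real) ^ a) *\<^sub>R (((-1::real) ^ (g 0)) *\<^sub>R mnm (opsZ a) f (Suc m))) \<phi>"
    proof -
      have lm: "{..m - 1} = {..<m}" using m1 by auto
      have "H (f 0) (g 0) * G (\<lambda>i. f (Suc i)) (\<lambda>i. g (Suc i)) = (\<Sum>a<m. ((-1::real) ^ a) *\<^sub>R (((-1::real) ^ (g 0)) *\<^sub>R mnm (opsZ a) f (Suc m)))"
        for f :: "nat \<Rightarrow> 'a" and g
        unfolding H_def G_def lm mnm_opsZ sum_distrib_left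
        by (rule sum.cong[OF refl]) (simp add: mult_scaleR_right mult_scaleR_left)
      then show ?thesis by simp
    qed
    also have "\<dots> = (\<Sum>a<m. h a)" unfolding h_def Y_def Alt_sum Alt_scale ..
    finally show ?thesis by simp
  qed
  have allD: "prod_list (map (\<lambda>i. D (\<phi> i)) [0..<m + 1]) = mnm (\<lambda>_. D) \<phi> (Suc m)" by (simp add: mnm_def)
  have allDb: "prod_list (map (\<lambda>i. Db (\<phi> i)) [0..<m + 1]) = mnm (\<lambda>_. Db) \<phi> (Suc m)" by (simp add: mnm_def)
  have fs: "(1 / fact (Suc m)) * real (Suc m) = (1 / fact m :: real)"
  proof -
    have p: "(fact m :: real) > 0" by simp
    have "(fact (Suc m) :: real) = real (Suc m) * fact m" by (rule fact_Suc)
    then show ?thesis using p by (simp del: of_nat_Suc)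
  qed
  show ?thesis
    unfolding L1 L2 L3 L4 L5 L6 allD allDb
    by (simp add: scaleR_add_right fs del: of_nat_Suc)
qed

end

theorem lemma2p1:
  fixes gr :: "nat \<Rightarrow> 'a::real_algebra_1 set" and D Db :: "'a \<Rightarrow> 'a"
    and m :: nat and k :: "nat \<Rightarrow> nat" and \<phi> :: "nat \<Rightarrow> 'a"
  assumes "dolbeault_alg gr D Db" and "m \<ge> 1" and "\<forall>i\<le>m. \<phi> i \<in> gr (k i)"
  shows "D (omega D Db m k \<phi>) + Db (omega D Db m k \<phi>) =
     ((-1::real) ^ m) *\<^sub>R prod_list (map (\<lambda>i. D (\<phi> i)) [0..<m + 1])
     + prod_list (map (\<lambda>i. Db (\<phi> i)) [0..<m + 1])
     + (1 / fact m) *\<^sub>R Alt (m + 1) k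
         (\<lambda>f g. ((-1::real) ^ g 0) *\<^sub>R
            (Db (D (f 0)) * omega D Db (m - 1) (\<lambda>i. g (i + 1)) (\<lambda>i. f (i + 1)))) \<phi>"
proof -
  interpret dolb gr D Db by (rule dolb.intro) (rule assms(1))
  show ?thesis by (rule main[OF assms(2) assms(3)])
qed

end
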